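(* Let $n\geqslant 2$ be an integer. Then $(\mathbf{1})\alpha=\mathbf{1}$ for every isometry $\alpha$ of $\mathbb{N}^n$ onto itself, where $\mathbf{1}=(1,\ldots,1)$.
   Context: $\mathbb{N}=\{1,2,3,\ldots\}$ and $\mathbb{N}^n$ carries the Euclidean metric $d((x_1,\ldots,x_n),(y_1,\ldots,y_n))=\sqrt{\sum_{i=1}^n(x_i-y_i)^2}$. An isometry of $\mathbb{N}^n$ is a distance-preserving bijection $\mathbb{N}^n\to\mathbb{N}^n$; maps are written on the right of their arguments. *)

theory Defs
  imports "HOL-Analysis.Analysis"
begin

text \<open>Points of N^n (N = {1,2,3,...}) are represented as lists of natural numbers
of length n with all entries at least 1.\<close>

definition NN :: "nat \<Rightarrow> nat list set" where
  "NN n = {xs. length xs = n \<and> (\<forall>x\<in>set xs. 1 \<le> x)}"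

definition edist :: "nat list \<Rightarrow> nat list \<Rightarrow> real" where
  "edist xs ys = sqrt (\<Sum>i<length xs. (real (xs ! i) - real (ys ! i))\<^sup>2)"

definition isometry_NN :: "nat \<Rightarrow> (nat list \<Rightarrow> nat list) \<Rightarrow> bool" where
  "isometry_NN n f \<longleftrightarrow> bij_betw f (NN n) (NN n) \<and>
     (\<forall>x\<in>NN n. \<forall>y\<in>NN n. edist (f x) (f y) = edist x y)"

end

theory Submission
  imports Defs
begin

lemma edist_upd:
  assumes "j < length y"
  shows "edist y (y[j:=v]) = \<bar>real (y!j) - real v\<bar>"
proof -
  have "(\<Sum>k<length y. (real (y!k) - real (y[j:=v]!k))^2)
      = (\<Sum>k<length y. if k = j then (real (y!j) - real v)^2 else 0)"
    by (rule sum.cong) (auto simp: nth_list_update)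
  also have "\<dots> = (real (y!j) - real v)^2" using assms by simp
  finally show ?thesis by (simp add: edist_def)
qed

lemma nbr1:
  assumes "x \<in> NN n" "edist (replicate n 1) x = 1"
  shows "x \<in> (\<lambda>j. (replicate n 1)[j:=2]) ` {..<n}"
proof -
  have lx: "length x = n" using assms(1) by (auto simp: NN_def)
  have ge: "\<And>k. k<n \<Longrightarrow> x!k \<ge> 1" using assms(1) lx by (auto simp: NN_def)
  have s: "(\<Sum>k<n. (1 - real (x!k))^2) = 1"
    using assms(2) by (simp add: edist_def)
  have "\<exists>j<n. x!j \<noteq> 1"
  proof (rule ccontr)
    assume "\<not> ?thesis"
    then have "(\<Sum>k<n. (1 - real (x!k))^2) = 0" by simp
    with s show False by simp
  qed
  then obtain j where j: "j<n" "x!j \<noteq> 1" by blast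
  have xj2: "x!j \<ge> 2" using ge[OF j(1)] j(2) by simp
  have tj: "(1 - real (x!j))^2 \<ge> 1"
  proof -
    have "real (x!j) - 1 \<ge> 1" using xj2 by simp
    then have "1*1 \<le> (real (x!j) - 1)*(real (x!j) - 1)" by (intro mult_mono) auto
    then have "1 \<le> (real (x!j) - 1)^2" by (simp add: power2_eq_square)
    then show ?thesis by (metis power2_commute)
  qed
  have others: "x!k = 1" if k: "k<n" "k\<noteq>j" for k
  proof (rule ccontr)
    assume "x!k \<noteq> 1"
    then have "x!k \<ge> 2" using ge[OF k(1)] by simp
    then have "real (x!k) - 1 \<ge> 1" by simp
    then have "1*1 \<le> (real (x!k) - 1)*(real (x!k) - 1)" by (intro mult_mono) auto
    then have "1 \<le> (real (x!k) - 1)^2" by (simp add: power2_eq_square)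
    then have tk: "(1 - real (x!k))^2 \<ge> 1" by (metis power2_commute)
    have "(\<Sum>k\<in>{j,k}. (1 - real (x!k))^2) \<le> (\<Sum>k<n. (1 - real (x!k))^2)"
      by (rule sum_mono2) (use j k in auto)
    then show False using tj tk s k by simp
  qed
  have "(\<Sum>k<n. (1 - real (x!k))^2) = (\<Sum>k<n. if k = j then (1 - real (x!j))^2 else 0)"
    by (rule sum.cong) (auto simp: others)
  then have "(1 - real (x!j))^2 = 1" using s j by simp
  then have "(real (x!j) - 1)^2 = 1" by (metis power2_commute)
  then have "real (x!j) - 1 = 1 \<or> real (x!j) - 1 = -1"
    using power2_eq_1_iff by blast
  then have "x!j = 2" using xj2 by auto
  then have "x = (replicate n 1)[j:=2]"
  proof (intro nth_equalityI)
    show "length x = length ((replicate n 1)[j:=2])" by (simp add: lx)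
    fix k assume "k < length x"
    then show "x!k = (replicate n 1)[j:=2] ! k"
      using \<open>x!j = 2\<close> others[of k] j lx by (cases "k = j") auto
  qed
  then show ?thesis using j by blast
qed

theorem corollary2p3:
  fixes n :: nat and \<alpha> :: "nat list \<Rightarrow> nat list"
  assumes "n \<ge> 2" and "isometry_NN n \<alpha>"
  shows "\<alpha> (replicate n 1) = replicate n 1"
proof (rule ccontr)
  define one where "one = replicate n (1::nat)"
  have one: "one \<in> NN n" by (simp add: one_def NN_def)
  have bij: "bij_betw \<alpha> (NN n) (NN n)" and iso: "\<And>x y. x\<in>NN n \<Longrightarrow> y\<in>NN n \<Longrightarrow> edist (\<alpha> x) (\<alpha> y) = edist x y"
    using assms(2) by (auto simp: isometry_NN_def)
  define y where "y = \<alpha> one"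
  have yN: "y \<in> NN n" using bij one y_def by (auto simp: bij_betw_def)
  then have ly: "length y = n" and gey: "\<And>k. k<n \<Longrightarrow> y!k \<ge> 1" by (auto simp: NN_def)
  assume "\<alpha> (replicate n 1) \<noteq> replicate n 1"
  then have "y \<noteq> one" by (simp add: y_def one_def)
  have "\<exists>i<n. y!i \<noteq> 1"
  proof (rule ccontr)
    assume "\<not> ?thesis"
    then have "y = one" by (intro nth_equalityI) (auto simp: ly one_def)
    with \<open>y \<noteq> one\<close> show False by simp
  qed
  then obtain i where i: "i<n" "y!i \<noteq> 1" by blast
  have yi: "y!i \<ge> 2" using gey[OF i(1)] i(2) by simp
  define f where "f = (\<lambda>j. y[j:=y!j+1])"
  define z where "z = y[i:=y!i-1]"
  define S where "S = insert z (f ` {..<n})"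
  have injf: "inj_on f {..<n}"
  proof (rule inj_onI)
    fix a b assume ab: "a \<in> {..<n}" "b \<in> {..<n}" "f a = f b"
    show "a = b"
    proof (rule ccontr)
      assume "a \<noteq> b"
      have "f a ! a = y!a + 1" using ab(1) ly by (simp add: f_def)
      moreover have "f b ! a = y!a" using ab(1) ly \<open>a \<noteq> b\<close> by (simp add: f_def)
      ultimately show False using ab(3) by simp
    qed
  qed
  have znot: "z \<notin> f ` {..<n}"
  proof
    assume "z \<in> f ` {..<n}"
    then obtain j where "j<n" "z = f j" by auto
    then have "z!i \<ge> y!i" using i ly by (auto simp: f_def nth_list_update)
    moreover have "z!i = y!i - 1" using i ly by (simp add: z_def)
    ultimately show False using yi by simp
  qed
  have cardS: "card S = n+1"
    using znot injf by (simp add: S_def card_image)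
  have SN: "S \<subseteq> NN n"
  proof
    fix s assume "s \<in> S"
    then consider "s = z" | j where "j<n" "s = f j" by (auto simp: S_def)
    then show "s \<in> NN n"
    proof cases
      case 1
      show ?thesis unfolding NN_def
      proof (intro CollectI conjI ballI)
        show "length s = n" using 1 ly by (simp add: z_def)
        fix a assume "a \<in> set s"
        then obtain k where "k < n" "a = s!k" using 1 ly by (auto simp: z_def in_set_conv_nth)
        then show "1 \<le> a" using 1 ly gey yi i by (auto simp: z_def nth_list_update)
      qed
    next
      case 2
      show ?thesis unfolding NN_def
      proof (intro CollectI conjI ballI)
        show "length s = n" using 2 ly by (simp add: f_def)
        fix a assume "a \<in> set s"
        then obtain k where "k < n" "a = s!k" using 2 ly by (auto simp: f_def in_set_conv_nth)
        then show "1 \<le> a" using 2 ly gey by (auto simp: f_def nth_list_update)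
      qed
    qed
  qed
  have Sd: "edist y s = 1" if "s \<in> S" for s
  proof -
    from that consider "s = z" | j where "j<n" "s = f j" by (auto simp: S_def)
    then show ?thesis
    proof cases
      case 1 then show ?thesis using edist_upd[of i y "y!i - 1"] i ly yi by (simp add: z_def of_nat_diff)
    next
      case 2 then show ?thesis using edist_upd[of j y "y!j + 1"] ly by (simp add: f_def)
    qed
  qed
  define T where "T = {x\<in>NN n. \<alpha> x \<in> S}"
  define B where "B = (\<lambda>j. (replicate n (1::nat))[j:=2]) ` {..<n}"
  have TB: "T \<subseteq> B"
  proof
    fix x assume "x \<in> T"
    then have x: "x \<in> NN n" "\<alpha> x \<in> S" by (auto simp: T_def)
    have "edist one x = 1" using iso[OF one x(1)] Sd[OF x(2)] by (simp add: y_def)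
    then show "x \<in> B" using nbr1[OF x(1)] by (simp add: B_def one_def)
  qed
  have finB: "finite B" by (simp add: B_def)
  have cB: "card B \<le> n" unfolding B_def using card_image_le[of "{..<n}"] by simp
  have "S \<subseteq> \<alpha> ` T"
  proof
    fix s assume s: "s \<in> S"
    then have "s \<in> \<alpha> ` NN n" using SN bij by (auto simp: bij_betw_def)
    then obtain x where "x \<in> NN n" "s = \<alpha> x" by auto
    then show "s \<in> \<alpha> ` T" using s by (auto simp: T_def)
  qed
  then have "card S \<le> card (\<alpha> ` T)"
    using finB TB by (intro card_mono) (auto intro: finite_subset)
  also have "\<dots> \<le> card T" by (rule card_image_le) (use finB TB in \<open>auto intro: finite_subset\<close>)
  also have "\<dots> \<le> card B" using finB TB by (rule_tac card_mono) auto
  finally show False using cB cardS by simp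
qed

end
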